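(* Let $k$ be a difference field of characteristic $0$, $R=k\{y_1,\ldots,y_n\}$, and $I$ a monomial $\sigma$-ideal of $R$ with support set $S=\{\mathbf{u}\in\mathbb{N}[x]^n:\mathbf{y}^{\mathbf{u}}\in I\}$. Then $\langle I\rangle_r=k[\sqrt{\langle S\rangle}]$.
   Context: A difference field is a field $k$ with a ring endomorphism $\sigma$; $R=k\{y_1,\ldots,y_n\}$ is the polynomial ring over $k$ in the variables $\sigma^j(y_i)$, with $\sigma$ extended naturally. For $p=\sum_ic_ix^i\in\mathbb{N}[x]$ and $a\in R$, $a^p=\prod_i(\sigma^i(a))^{c_i}$; $\mathbf{y}^{\mathbf{u}}=y_1^{u_1}\cdots y_n^{u_n}$. A $\sigma$-ideal is an ideal stable under $\sigma$; monomial if generated by monomials; well-mixed if $ab\in I\Rightarrow a\sigma(b)\in I$. $\langle I\rangle_r$ is the smallest radical well-mixed $\sigma$-ideal containing $I$. For $T\subseteq\mathbb{N}[x]^n$: $k[T]=\bigoplus_{\mathbf{u}\in T}k\mathbf{y}^{\mathbf{u}}$; $[T]=\{g\mathbf{u}+\mathbf{t}:\mathbf{u}\in T,\ g\in\mathbb{N}[x]\setminus\{0\},\ \mathbf{t}\in\mathbb{N}[x]^n\}$; $\sqrt{T}=\{\mathbf{u}\in\mathbb{N}[x]^n:m\mathbf{u}\in[T]\text{ for some }m\in\mathbb{N}\setminus\{0\}\}$; $T'=\{\mathbf{u}+x\mathbf{v}:\mathbf{u},\mathbf{v}\in\mathbb{N}[x]^n,\ \mathbf{u}+\mathbf{v}\in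 T\}$; $S^{[0]}=S$, $S^{[j]}=[S^{[j-1]}]'$ for $j\ge1$; $\langle S\rangle=\bigcup_{j\ge0}S^{[j]}$. *)

theory Defs
  imports "HOL-Library.Poly_Mapping" "HOL-Computational_Algebra.Polynomial"
begin

(* Difference polynomial ring R = k{y_i : i in 'n}.  The variable sigma^j(y_i) is (i,j). *)
type_synonym 'n dmono = "('n \<times> nat) \<Rightarrow>\<^sub>0 nat"
type_synonym ('n,'k) dpoly = "'n dmono \<Rightarrow>\<^sub>0 'k"

definition ring_endo :: "('k::field \<Rightarrow> 'k) \<Rightarrow> bool" where
  "ring_endo \<sigma> \<longleftrightarrow> \<sigma> 1 = 1 \<and> (\<forall>a b. \<sigma> (a + b) = \<sigma> a + \<sigma> b) \<and> (\<forall>a b. \<sigma> (a * b) = \<sigma> a * \<sigma> b)"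

definition shift_mono :: "'n dmono \<Rightarrow> 'n dmono" where
  "shift_mono m = (\<Sum>v\<in>Poly_Mapping.keys m. Poly_Mapping.single (fst v, Suc (snd v)) (Poly_Mapping.lookup m v))"

definition sigmaR :: "('k::field \<Rightarrow> 'k) \<Rightarrow> ('n,'k) dpoly \<Rightarrow> ('n,'k) dpoly" where
  "sigmaR \<sigma> p = (\<Sum>m\<in>Poly_Mapping.keys p. Poly_Mapping.single (shift_mono m) (\<sigma> (Poly_Mapping.lookup p m)))"

definition is_ideal :: "('n,'k::field) dpoly set \<Rightarrow> bool" where
  "is_ideal I \<longleftrightarrow> 0 \<in> I \<and> (\<forall>a\<in>I. \<forall>b\<in>I. a + b \<in> I) \<and> (\<forall>r. \<forall>a\<in>I. r * a \<in> I)"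

definition ideal_gen :: "('n,'k::field) dpoly set \<Rightarrow> ('n,'k) dpoly set" where
  "ideal_gen G = \<Inter>{J. is_ideal J \<and> G \<subseteq> J}"

definition sigma_ideal :: "('k::field \<Rightarrow> 'k) \<Rightarrow> ('n,'k) dpoly set \<Rightarrow> bool" where
  "sigma_ideal \<sigma> I \<longleftrightarrow> is_ideal I \<and> (\<forall>a\<in>I. sigmaR \<sigma> a \<in> I)"

definition monomial_ideal :: "('n,'k::field) dpoly set \<Rightarrow> bool" where
  "monomial_ideal I \<longleftrightarrow> (\<exists>M. I = ideal_gen ((\<lambda>m. Poly_Mapping.single m 1) ` M))"

definition well_mixed :: "('k::field \<Rightarrow> 'k) \<Rightarrow> ('n,'k) dpoly set \<Rightarrow> bool" where
  "well_mixed \<sigma> I \<longleftrightarrow> (\<forall>a b. a * b \<in> I \<longrightarrow> a * sigmaR \<sigma> b \<in> I)"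

definition radical :: "('n,'k::field) dpoly set \<Rightarrow> bool" where
  "radical I \<longleftrightarrow> (\<forall>a m. m > 0 \<and> a ^ m \<in> I \<longrightarrow> a \<in> I)"

definition rwm_closure :: "('k::field \<Rightarrow> 'k) \<Rightarrow> ('n,'k) dpoly set \<Rightarrow> ('n,'k) dpoly set" where
  "rwm_closure \<sigma> I = \<Inter>{J. sigma_ideal \<sigma> J \<and> well_mixed \<sigma> J \<and> radical J \<and> I \<subseteq> J}"

definition mono_of :: "('n::finite \<Rightarrow> nat poly) \<Rightarrow> 'n dmono" where
  "mono_of u = (\<Sum>i\<in>UNIV. \<Sum>j\<le>degree (u i). Poly_Mapping.single (i, j) (coeff (u i) j))"

definition kspan :: "('n::finite \<Rightarrow> nat poly) set \<Rightarrow> ('n,'k::field) dpoly set" where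
  "kspan T = {p. Poly_Mapping.keys p \<subseteq> mono_of ` T}"

definition supp_set :: "('n::finite,'k::field) dpoly set \<Rightarrow> ('n \<Rightarrow> nat poly) set" where
  "supp_set I = {u. Poly_Mapping.single (mono_of u) 1 \<in> I}"

definition brk :: "('n \<Rightarrow> nat poly) set \<Rightarrow> ('n \<Rightarrow> nat poly) set" where
  "brk T = {(\<lambda>i. g * u i + t i) | g u t. u \<in> T \<and> g \<noteq> 0}"

definition nsqrt :: "('n \<Rightarrow> nat poly) set \<Rightarrow> ('n \<Rightarrow> nat poly) set" where
  "nsqrt T = {u. \<exists>m::nat. m > 0 \<and> (\<lambda>i. of_nat m * u i) \<in> brk T}"

definition nprime :: "('n \<Rightarrow> nat poly) set \<Rightarrow> ('n \<Rightarrow> nat poly) set" where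
  "nprime T = {(\<lambda>i. u i + [:0, 1:] * v i) | u v. (\<lambda>i. u i + v i) \<in> T}"

definition Siter :: "('n \<Rightarrow> nat poly) set \<Rightarrow> nat \<Rightarrow> ('n \<Rightarrow> nat poly) set" where
  "Siter S j = ((\<lambda>T. nprime (brk T)) ^^ j) S"

definition angle :: "('n \<Rightarrow> nat poly) set \<Rightarrow> ('n \<Rightarrow> nat poly) set" where
  "angle S = (\<Union>j. Siter S j)"

end

theory Submission imports Defs "HOL-Library.Countable" begin

lemma lookup_mono_of: "Poly_Mapping.lookup (mono_of u) (i,j) = coeff (u i) j"
proof -
  have "Poly_Mapping.lookup (mono_of u) (i,j) =
    (\<Sum>i'\<in>UNIV. \<Sum>j'\<le>degree (u i'). (coeff (u i') j' when (i',j') = (i,j)))"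
    by (simp add: mono_of_def lookup_sum lookup_single)
  also have "\<dots> = (\<Sum>i'\<in>UNIV. if i' = i then (\<Sum>j'\<le>degree (u i). (coeff (u i) j' when j' = j)) else 0)"
    by (rule sum.cong) (auto simp: when_def)
  also have "\<dots> = (\<Sum>j'\<le>degree (u i). (coeff (u i) j' when j' = j))"
    by simp
  also have "\<dots> = coeff (u i) j"
    by (simp add: when_def coeff_eq_0 not_le)
  finally show ?thesis .
qed

lemma lookup_shift: "Poly_Mapping.lookup (shift_mono m) (i,j) = (case j of 0 \<Rightarrow> 0 | Suc j' \<Rightarrow> Poly_Mapping.lookup m (i,j'))"
proof (cases j)
  case 0 then show ?thesis by (simp add: shift_mono_def lookup_sum lookup_single when_def)
next
  case (Suc j')
  have "Poly_Mapping.lookup (shift_mono m) (i,j) = (\<Sum>v\<in>Poly_Mapping.keys m. (Poly_Mapping.lookup m v when v = (i,j')))"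
    unfolding shift_mono_def lookup_sum lookup_single Suc
    by (rule sum.cong) (auto simp: when_def)
  also have "\<dots> = Poly_Mapping.lookup m (i,j')"
    by (simp add: when_def in_keys_iff)
  finally show ?thesis using Suc by simp
qed


definition pol_of :: "'n dmono \<Rightarrow> ('n \<Rightarrow> nat poly)" where
  "pol_of w = (\<lambda>i. Abs_poly (\<lambda>j. Poly_Mapping.lookup w (i,j)))"

lemma coeff_pol_of: "coeff (pol_of w i) j = Poly_Mapping.lookup w (i,j)"
proof -
  have "{j. Poly_Mapping.lookup w (i,j) \<noteq> 0} \<subseteq> snd ` Poly_Mapping.keys w"
  proof
    fix j assume "j \<in> {j. Poly_Mapping.lookup w (i,j) \<noteq> 0}"
    then have "(i,j) \<in> Poly_Mapping.keys w" by (simp add: in_keys_iff)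
    then show "j \<in> snd ` Poly_Mapping.keys w" by (rule rev_image_eqI) simp
  qed
  then have "finite {j. Poly_Mapping.lookup w (i,j) \<noteq> 0}"
    by (rule finite_subset) (simp add: finite_imageI)
  then have "\<forall>\<^sub>\<infinity>j. Poly_Mapping.lookup w (i,j) = 0"
    by (simp only: MOST_iff_cofinite not_not)
  then have "coeff (Abs_poly (\<lambda>j. Poly_Mapping.lookup w (i,j))) = (\<lambda>j. Poly_Mapping.lookup w (i,j))"
    by (intro Abs_poly_inverse) simp
  then show ?thesis unfolding pol_of_def by simp
qed

lemma mono_of_eqI:
  assumes H: "\<And>i j. Poly_Mapping.lookup w (i,j) = coeff (u i) j"
  shows "mono_of u = w"
proof (rule poly_mapping_eqI)
  fix k
  show "Poly_Mapping.lookup (mono_of u) k = Poly_Mapping.lookup w k"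
    by (cases k) (simp only: lookup_mono_of H)
qed

lemma mono_of_pol_of [simp]: "mono_of (pol_of w) = w"
  by (rule mono_of_eqI) (simp add: coeff_pol_of)

lemma mono_of_inj: "mono_of u = mono_of v \<Longrightarrow> u = v"
proof
  fix i assume "mono_of u = mono_of v"
  then show "u i = v i"
  proof (intro poly_eqI)
    fix j assume "mono_of u = mono_of v"
    then have "Poly_Mapping.lookup (mono_of u) (i,j) = Poly_Mapping.lookup (mono_of v) (i,j)" by simp
    then show "coeff (u i) j = coeff (v i) j" by (simp only: lookup_mono_of)
  qed
qed

lemma pol_of_mono_of [simp]: "pol_of (mono_of u) = u"
  by (rule mono_of_inj) simp

lemma mono_of_add: "mono_of (\<lambda>i. u i + v i) = mono_of u + mono_of v"
  by (rule mono_of_eqI) (simp add: lookup_add lookup_mono_of)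

lemma mono_of_xmul: "mono_of (\<lambda>i. u i + [:0,1:] * v i) = mono_of u + shift_mono (mono_of v)"
  by (rule mono_of_eqI) (simp add: lookup_add lookup_mono_of lookup_shift coeff_pCons split: nat.split)

lemma mono_of_nmul: "Poly_Mapping.lookup (mono_of (\<lambda>i. of_nat n * u i)) q = n * Poly_Mapping.lookup (mono_of u) q"
  by (cases q) (simp add: lookup_mono_of of_nat_poly)

lemma shift_single: "shift_mono (Poly_Mapping.single (i,j) c) = Poly_Mapping.single (i, Suc j) c"
proof (rule poly_mapping_eqI)
  fix k
  show "Poly_Mapping.lookup (shift_mono (Poly_Mapping.single (i, j) c)) k = Poly_Mapping.lookup (Poly_Mapping.single (i, Suc j) c) k"
  proof (cases k)
    case (Pair a b)
    then show ?thesis by (cases b) (simp_all add: lookup_shift lookup_single)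
  qed
qed

lemma le_ex_add: "(\<And>q. Poly_Mapping.lookup a q \<le> Poly_Mapping.lookup (b::'a \<Rightarrow>\<^sub>0 nat) q) \<Longrightarrow> b = a + (b - a)"
  by (rule poly_mapping_eqI) (simp add: lookup_add lookup_minus)


lemma Siter_0: "Siter S 0 = S" by (simp add: Siter_def)
lemma Siter_Suc: "Siter S (Suc j) = nprime (brk (Siter S j))" by (simp add: Siter_def)

lemma brkI: "u \<in> T \<Longrightarrow> g \<noteq> 0 \<Longrightarrow> (\<lambda>i. g * u i + t i) \<in> brk T"
  unfolding brk_def by blast

lemma nprimeI: "(\<lambda>i. u i + v i) \<in> T \<Longrightarrow> (\<lambda>i. u i + [:0,1:] * v i) \<in> nprime T"
  unfolding nprime_def by blast

lemma brk_sub: "T \<subseteq> brk T"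
proof
  fix u assume "u \<in> T"
  then have "(\<lambda>i. 1 * u i + 0) \<in> brk T" using brkI[of u T 1 "\<lambda>i. 0"] by simp
  then show "u \<in> brk T" by simp
qed

lemma nprime_sub: "T \<subseteq> nprime T"
proof
  fix u assume "u \<in> T"
  then have "(\<lambda>i. u i + [:0,1:] * 0) \<in> nprime T" unfolding nprime_def by fastforce
  then show "u \<in> nprime T" by simp
qed

lemma Siter_sub_Suc: "Siter S j \<subseteq> Siter S (Suc j)"
  unfolding Siter_Suc using brk_sub nprime_sub by blast

lemma brk_angle: "brk (angle S) \<subseteq> angle S"
proof
  fix x assume "x \<in> brk (angle S)"
  then obtain g u t where x: "x = (\<lambda>i. g * u i + t i)" and u: "u \<in> angle S" and g: "g \<noteq> 0"
    unfolding brk_def by blast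
  from u obtain j where "u \<in> Siter S j" unfolding angle_def by blast
  then have "x \<in> brk (Siter S j)" unfolding brk_def x using g by blast
  then have "x \<in> Siter S (Suc j)" unfolding Siter_Suc using nprime_sub by blast
  then show "x \<in> angle S" unfolding angle_def by blast
qed

lemma nprime_angle: "nprime (angle S) \<subseteq> angle S"
proof
  fix x assume "x \<in> nprime (angle S)"
  then obtain u v where x: "x = (\<lambda>i. u i + [:0,1:] * v i)" and uv: "(\<lambda>i. u i + v i) \<in> angle S"
    unfolding nprime_def by blast
  from uv obtain j where "(\<lambda>i. u i + v i) \<in> Siter S j" unfolding angle_def by blast
  then have "(\<lambda>i. u i + v i) \<in> brk (Siter S j)" using brk_sub by blast
  then have "x \<in> Siter S (Suc j)" unfolding Siter_Suc nprime_def x by blast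
  then show "x \<in> angle S" unfolding angle_def by blast
qed

lemma S_angle: "S \<subseteq> angle S"
  unfolding angle_def using Siter_0 by blast

lemma T_up:
  assumes "u \<in> nsqrt (angle S)"
  shows "(\<lambda>i. u i + t i) \<in> nsqrt (angle S)"
proof -
  from assms obtain m :: nat where m: "m > 0" "(\<lambda>i. of_nat m * u i) \<in> brk (angle S)"
    unfolding nsqrt_def by blast
  then obtain g w t0 where e: "(\<lambda>i. of_nat m * u i) = (\<lambda>i. g * w i + t0 i)" and w: "w \<in> angle S" "g \<noteq> 0"
    unfolding brk_def by blast
  have "(\<lambda>i. of_nat m * (u i + t i)) = (\<lambda>i. g * w i + (t0 i + of_nat m * t i))"
  proof
    fix i
    have "of_nat m * u i = g * w i + t0 i" using fun_cong[OF e, of i] by simp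
    then show "of_nat m * (u i + t i) = g * w i + (t0 i + of_nat m * t i)"
      by (simp add: algebra_simps)
  qed
  also have "\<dots> \<in> brk (angle S)" using brkI[OF w, of "\<lambda>i. t0 i + of_nat m * t i"] by simp
  finally show ?thesis unfolding nsqrt_def using m(1) by blast
qed

lemma T_rad:
  assumes "m > 0" "(\<lambda>i. of_nat m * u i) \<in> nsqrt (angle S)"
  shows "u \<in> nsqrt (angle S)"
proof -
  from assms obtain m' :: nat where m: "m' > 0" "(\<lambda>i. of_nat m' * (of_nat m * u i)) \<in> brk (angle S)"
    unfolding nsqrt_def by blast
  have "(\<lambda>i. of_nat m' * (of_nat m * u i)) = (\<lambda>i. of_nat (m' * m) * u i)"
    by (simp add: mult.assoc)
  then show ?thesis using m assms(1) unfolding nsqrt_def by (intro CollectI exI[of _ "m'*m"]) simp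
qed

lemma T_nprime:
  assumes "(\<lambda>i. u i + v i) \<in> nsqrt (angle S)"
  shows "(\<lambda>i. u i + [:0,1:] * v i) \<in> nsqrt (angle S)"
proof -
  from assms obtain m :: nat where m: "m > 0" "(\<lambda>i. of_nat m * (u i + v i)) \<in> brk (angle S)"
    unfolding nsqrt_def by blast
  then have "(\<lambda>i. of_nat m * u i + of_nat m * v i) \<in> angle S"
    using brk_angle by (simp add: algebra_simps) blast
  then have "(\<lambda>i. of_nat m * u i + [:0,1:] * (of_nat m * v i)) \<in> nprime (angle S)"
    by (rule nprimeI[where u="\<lambda>i. of_nat m * u i" and v="\<lambda>i. of_nat m * v i"])
  then have "(\<lambda>i. of_nat m * u i + [:0,1:] * (of_nat m * v i)) \<in> brk (angle S)"
    using nprime_angle brk_sub by blast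
  moreover have "(\<lambda>i. of_nat m * u i + [:0,1:] * (of_nat m * v i)) = (\<lambda>i. of_nat m * (u i + [:0,1:] * v i))"
    by (simp add: algebra_simps)
  ultimately show ?thesis using m(1) unfolding nsqrt_def by auto
qed

lemma S_T: "S \<subseteq> nsqrt (angle S)"
proof
  fix u assume "u \<in> S"
  then have "u \<in> brk (angle S)" using S_angle brk_sub by blast
  then have "(\<lambda>i. of_nat 1 * u i) \<in> brk (angle S)" by simp
  then show "u \<in> nsqrt (angle S)" unfolding nsqrt_def by blast
qed


definition Tm :: "('n::finite \<Rightarrow> nat poly) set \<Rightarrow> 'n dmono set" where
  "Tm S = mono_of ` nsqrt (angle S)"

lemma memTm: "w \<in> Tm S \<longleftrightarrow> pol_of w \<in> nsqrt (angle S)"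
  unfolding Tm_def by (metis image_eqI mono_of_pol_of imageE pol_of_mono_of)

lemma mono_of_zero: "mono_of (\<lambda>i. 0) = 0"
  by (rule mono_of_eqI) simp

lemma TM1: "w \<in> Tm S \<Longrightarrow> w + d \<in> Tm S"
proof -
  assume "w \<in> Tm S"
  then have "pol_of w \<in> nsqrt (angle S)" by (simp add: memTm)
  then have "(\<lambda>i. pol_of w i + pol_of d i) \<in> nsqrt (angle S)" by (rule T_up)
  then have "mono_of (\<lambda>i. pol_of w i + pol_of d i) \<in> Tm S" unfolding Tm_def by blast
  then show ?thesis by (simp add: mono_of_add)
qed

lemma TM1': "w \<in> Tm S \<Longrightarrow> (\<And>q. Poly_Mapping.lookup w q \<le> Poly_Mapping.lookup w' q) \<Longrightarrow> w' \<in> Tm S"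
  by (metis TM1 le_ex_add)

lemma TM2:
  assumes "n > 0" "u \<in> Tm S" "\<And>q. Poly_Mapping.lookup u q \<le> n * Poly_Mapping.lookup w q"
  shows "w \<in> Tm S"
proof -
  let ?v = "\<lambda>i. of_nat n * pol_of w i"
  have "\<And>q. Poly_Mapping.lookup (mono_of ?v) q = n * Poly_Mapping.lookup w q"
    by (simp add: mono_of_nmul)
  then have "mono_of ?v \<in> Tm S" using TM1'[OF assms(2), of "mono_of ?v"] assms(3) by simp
  then have "?v \<in> nsqrt (angle S)" by (simp add: memTm)
  then have "pol_of w \<in> nsqrt (angle S)" using T_rad[OF assms(1)] by blast
  then show ?thesis by (simp add: memTm)
qed

lemma TM3:
  assumes "w + Poly_Mapping.single (i,j) c \<in> Tm S"
  shows "w + Poly_Mapping.single (i,Suc j) c \<in> Tm S"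
proof -
  let ?u = "pol_of w" and ?v = "pol_of (Poly_Mapping.single (i,j) c)"
  have "mono_of (\<lambda>l. ?u l + ?v l) = w + Poly_Mapping.single (i,j) c" by (simp add: mono_of_add)
  then have "(\<lambda>l. ?u l + ?v l) \<in> nsqrt (angle S)" using assms by (metis memTm pol_of_mono_of)
  then have "(\<lambda>l. ?u l + [:0,1:] * ?v l) \<in> nsqrt (angle S)" by (rule T_nprime)
  then have "mono_of (\<lambda>l. ?u l + [:0,1:] * ?v l) \<in> Tm S" unfolding Tm_def by blast
  then show ?thesis unfolding mono_of_xmul by (simp add: shift_single)
qed

lemma TM3k:
  "w + Poly_Mapping.single (i,j) c \<in> Tm S \<Longrightarrow> w + Poly_Mapping.single (i,j+k) c \<in> Tm S"
  by (induction k) (auto dest: TM3)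

lemma TM4:
  assumes "w \<in> Tm S"
  shows "shift_mono w \<in> Tm S"
proof -
  have "(\<lambda>l. 0 + pol_of w l) \<in> nsqrt (angle S)" using assms by (simp add: memTm)
  then have "(\<lambda>l. 0 + [:0,1:] * pol_of w l) \<in> nsqrt (angle S)" by (rule T_nprime)
  then have "mono_of (\<lambda>l. 0 + [:0,1:] * pol_of w l) \<in> Tm S" unfolding Tm_def by blast
  then show ?thesis using mono_of_xmul[of "\<lambda>l. 0" "pol_of w"] by (simp add: mono_of_zero)
qed

lemma S_Tm: "u \<in> S \<Longrightarrow> mono_of u \<in> Tm S"
  using S_T unfolding Tm_def by blast


lemma pm_sum_single: "p = (\<Sum>w\<in>Poly_Mapping.keys p. Poly_Mapping.single w (Poly_Mapping.lookup p w))"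
proof (rule poly_mapping_eqI)
  fix k
  have "Poly_Mapping.lookup (\<Sum>w\<in>Poly_Mapping.keys p. Poly_Mapping.single w (Poly_Mapping.lookup p w)) k
    = (\<Sum>w\<in>Poly_Mapping.keys p. (if w = k then Poly_Mapping.lookup p w else 0))"
    by (simp add: lookup_sum lookup_single when_def)
  also have "\<dots> = Poly_Mapping.lookup p k" by (simp add: in_keys_iff)
  finally show "Poly_Mapping.lookup p k = Poly_Mapping.lookup (\<Sum>w\<in>Poly_Mapping.keys p. Poly_Mapping.single w (Poly_Mapping.lookup p w)) k"
    by simp
qed

lemma move_lemma:
  assumes "finite F"
  shows "(\<forall>p\<in>F. snd p \<le> tg (fst p)) \<Longrightarrow> (\<Sum>p\<in>F. Poly_Mapping.single p (c p)) + r \<in> Tm S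
    \<Longrightarrow> (\<Sum>p\<in>F. Poly_Mapping.single (fst p, tg (fst p)) (c p)) + r \<in> Tm S"
  using assms
proof (induction F arbitrary: r rule: finite_induct)
  case empty
  then show ?case by simp
next
  case (insert p F)
  have "(\<Sum>p\<in>F. Poly_Mapping.single p (c p)) + (Poly_Mapping.single p (c p) + r) \<in> Tm S"
    using insert.prems insert.hyps by (simp add: ac_simps)
  then have "(\<Sum>p\<in>F. Poly_Mapping.single (fst p, tg (fst p)) (c p)) + (Poly_Mapping.single p (c p) + r) \<in> Tm S"
    using insert.IH insert.prems by blast
  then have "((\<Sum>p\<in>F. Poly_Mapping.single (fst p, tg (fst p)) (c p)) + r) + Poly_Mapping.single (fst p, snd p) (c p) \<in> Tm S"
    by (simp add: ac_simps)
  then have "((\<Sum>p\<in>F. Poly_Mapping.single (fst p, tg (fst p)) (c p)) + r) + Poly_Mapping.single (fst p, snd p + (tg (fst p) - snd p)) (c p) \<in> Tm S"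
    by (rule TM3k)
  moreover have "snd p + (tg (fst p) - snd p) = tg (fst p)" using insert.prems by auto
  ultimately show ?case using insert.hyps by (simp add: ac_simps)
qed

lemma key_lemma:
  assumes w: "w \<notin> Tm S" and u: "u \<in> Tm S"
    and cov: "\<forall>p\<in>Poly_Mapping.keys u. \<exists>j'. snd p \<le> j' \<and> (fst p, j') \<in> Poly_Mapping.keys w"
  shows False
proof -
  define tg where "tg i = Max {j. (i,j) \<in> Poly_Mapping.keys w}" for i
  have fin: "finite {j. (i,j) \<in> Poly_Mapping.keys w}" for i
  proof (rule finite_subset)
    show "{j. (i,j) \<in> Poly_Mapping.keys w} \<subseteq> snd ` Poly_Mapping.keys w"
    proof
      fix j assume "j \<in> {j. (i,j) \<in> Poly_Mapping.keys w}"
      then show "j \<in> snd ` Poly_Mapping.keys w" by (intro rev_image_eqI[of "(i,j)"]) simp_all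
    qed
  qed simp
  have tg1: "snd p \<le> tg (fst p) \<and> (fst p, tg (fst p)) \<in> Poly_Mapping.keys w" if "p \<in> Poly_Mapping.keys u" for p
  proof -
    have "\<exists>j'. snd p \<le> j' \<and> (fst p, j') \<in> Poly_Mapping.keys w" using cov that by (rule bspec)
    then obtain j' where j': "snd p \<le> j'" "(fst p, j') \<in> Poly_Mapping.keys w" by (elim exE conjE)
    have m: "j' \<in> {j. (fst p,j) \<in> Poly_Mapping.keys w}" using j'(2) by simp
    have "j' \<le> tg (fst p)" unfolding tg_def by (rule Max_ge[OF fin m])
    moreover have "tg (fst p) \<in> {j. (fst p,j) \<in> Poly_Mapping.keys w}" unfolding tg_def
      by (rule Max_in[OF fin]) (use m in blast)
    ultimately show ?thesis using j' by simp
  qed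
  define u' where "u' = (\<Sum>p\<in>Poly_Mapping.keys u. Poly_Mapping.single (fst p, tg (fst p)) (Poly_Mapping.lookup u p))"
  have "(\<Sum>p\<in>Poly_Mapping.keys u. Poly_Mapping.single p (Poly_Mapping.lookup u p)) + 0 \<in> Tm S"
    using u by (simp only: pm_sum_single[of u, symmetric] add_0_right)
  moreover have tgle: "\<forall>p\<in>Poly_Mapping.keys u. snd p \<le> tg (fst p)" using tg1 by blast
  ultimately have "u' + 0 \<in> Tm S" unfolding u'_def
    using move_lemma[OF finite_keys tgle] by blast
  then have u'T: "u' \<in> Tm S" by simp
  define n where "n = Suc (\<Sum>p\<in>Poly_Mapping.keys u. Poly_Mapping.lookup u p)"
  have "Poly_Mapping.lookup u' q \<le> n * Poly_Mapping.lookup w q" for q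
  proof (cases "q \<in> Poly_Mapping.keys w")
    case True
    have "Poly_Mapping.lookup u' q = (\<Sum>p\<in>Poly_Mapping.keys u. (if (fst p, tg (fst p)) = q then Poly_Mapping.lookup u p else 0))"
      unfolding u'_def by (simp add: lookup_sum lookup_single when_def)
    also have "\<dots> \<le> (\<Sum>p\<in>Poly_Mapping.keys u. Poly_Mapping.lookup u p)"
      by (rule sum_mono) simp
    also have "\<dots> \<le> n" unfolding n_def by simp
    also have "\<dots> \<le> n * Poly_Mapping.lookup w q" using True by (simp add: in_keys_iff)
    finally show ?thesis .
  next
    case False
    have "Poly_Mapping.lookup u' q = (\<Sum>p\<in>Poly_Mapping.keys u. (if (fst p, tg (fst p)) = q then Poly_Mapping.lookup u p else 0))"
      unfolding u'_def by (simp add: lookup_sum lookup_single when_def)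
    also have "\<dots> = 0" using False tg1 by (intro sum.neutral) auto
    finally show ?thesis by simp
  qed
  then have "w \<in> Tm S" using TM2[OF _ u'T] unfolding n_def by blast
  then show False using w by blast
qed


definition encm :: "'n::finite dmono \<Rightarrow> (nat \<Rightarrow>\<^sub>0 nat)" where
  "encm w = Abs_poly_mapping (\<lambda>n. if n \<in> range (to_nat :: 'n \<times> nat \<Rightarrow> nat) then Poly_Mapping.lookup w (from_nat n) else 0)"

lemma lookup_hm: fixes w :: "'n::finite dmono" shows "Poly_Mapping.lookup (encm w) = (\<lambda>n. if n \<in> range (to_nat :: 'n \<times> nat \<Rightarrow> nat) then Poly_Mapping.lookup w (from_nat n) else 0)"
proof -
  have "{n. (if n \<in> range (to_nat :: 'n \<times> nat \<Rightarrow> nat) then Poly_Mapping.lookup w (from_nat n) else 0) \<noteq> 0} \<subseteq> to_nat ` Poly_Mapping.keys w"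
    by (auto simp: in_keys_iff)
  then have "finite {n. (if n \<in> range (to_nat :: 'n \<times> nat \<Rightarrow> nat) then Poly_Mapping.lookup w (from_nat n) else 0) \<noteq> 0}"
    by (rule finite_subset) simp
  then show ?thesis unfolding encm_def by simp
qed

lemma lookup_hm_to_nat: "Poly_Mapping.lookup (encm w) (to_nat x) = Poly_Mapping.lookup w x"
  by (simp add: lookup_hm)

lemma hm_add: "encm (a + b) = encm a + encm b"
  by (rule poly_mapping_eqI) (simp add: lookup_hm lookup_add)

lemma hm_inj: "inj encm"
proof (rule injI)
  fix a b :: "'n::finite dmono" assume "encm a = encm b"
  then have "Poly_Mapping.lookup a x = Poly_Mapping.lookup b x" for x
    by (metis lookup_hm_to_nat)
  then show "a = b" by (rule poly_mapping_eqI)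
qed

definition Phi :: "('n::finite,'k::field) dpoly \<Rightarrow> (nat \<Rightarrow>\<^sub>0 nat) \<Rightarrow>\<^sub>0 'k" where
  "Phi p = Abs_poly_mapping (\<lambda>d. if d \<in> range (encm :: 'n dmono \<Rightarrow> nat \<Rightarrow>\<^sub>0 nat) then Poly_Mapping.lookup p (inv (encm :: 'n dmono \<Rightarrow> nat \<Rightarrow>\<^sub>0 nat) d) else 0)"

lemma lookup_Phi: fixes p :: "('n::finite,'k::field) dpoly" shows "Poly_Mapping.lookup (Phi p) = (\<lambda>d. if d \<in> range (encm :: 'n dmono \<Rightarrow> nat \<Rightarrow>\<^sub>0 nat) then Poly_Mapping.lookup p (inv (encm :: 'n dmono \<Rightarrow> nat \<Rightarrow>\<^sub>0 nat) d) else 0)"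
proof -
  have "{d. (if d \<in> range (encm :: 'n dmono \<Rightarrow> nat \<Rightarrow>\<^sub>0 nat) then Poly_Mapping.lookup p (inv (encm :: 'n dmono \<Rightarrow> nat \<Rightarrow>\<^sub>0 nat) d) else 0) \<noteq> 0} \<subseteq> encm ` Poly_Mapping.keys p"
  proof
    fix d assume "d \<in> {d. (if d \<in> range (encm :: 'n dmono \<Rightarrow> nat \<Rightarrow>\<^sub>0 nat) then Poly_Mapping.lookup p (inv (encm :: 'n dmono \<Rightarrow> nat \<Rightarrow>\<^sub>0 nat) d) else 0) \<noteq> 0}"
    then obtain w :: "'n dmono" where "d = encm w" "Poly_Mapping.lookup p (inv (encm :: 'n dmono \<Rightarrow> nat \<Rightarrow>\<^sub>0 nat) d) \<noteq> 0" by (auto split: if_splits)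
    then show "d \<in> encm ` Poly_Mapping.keys p" by (simp add: in_keys_iff inv_f_f[OF hm_inj])
  qed
  then have "finite {d. (if d \<in> range (encm :: 'n dmono \<Rightarrow> nat \<Rightarrow>\<^sub>0 nat) then Poly_Mapping.lookup p (inv (encm :: 'n dmono \<Rightarrow> nat \<Rightarrow>\<^sub>0 nat) d) else 0) \<noteq> 0}"
    by (rule finite_subset) simp
  then show ?thesis unfolding Phi_def by simp
qed

lemma lookup_Phi_hm: "Poly_Mapping.lookup (Phi p) (encm w) = Poly_Mapping.lookup p w"
  by (simp add: lookup_Phi inv_f_f[OF hm_inj])

lemma Phi_add: "Phi (a + b) = Phi a + Phi b"
  by (rule poly_mapping_eqI) (simp add: lookup_Phi lookup_add)

lemma Phi_zero: "Phi 0 = 0"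
  by (rule poly_mapping_eqI) (simp add: lookup_Phi)

lemma Phi_sum: "Phi (sum f A) = (\<Sum>x\<in>A. Phi (f x))"
  by (induction A rule: infinite_finite_induct) (simp_all add: Phi_zero Phi_add)

lemma Phi_single:
  fixes w :: "'n::finite dmono" and c :: "'k::field"
  shows "Phi (Poly_Mapping.single w c) = Poly_Mapping.single (encm w) c"
proof (rule poly_mapping_eqI)
  fix d
  show "Poly_Mapping.lookup (Phi (Poly_Mapping.single w c)) d = Poly_Mapping.lookup (Poly_Mapping.single (encm w) c) d"
  proof (cases "d \<in> range (encm :: 'n dmono \<Rightarrow> nat \<Rightarrow>\<^sub>0 nat)")
    case True
    then obtain v :: "'n dmono" where d: "d = encm v" by blast
    show ?thesis unfolding d lookup_Phi_hm by (simp add: lookup_single when_def inj_eq[OF hm_inj])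
  next
    case False
    then show ?thesis by (auto simp: lookup_Phi lookup_single when_def)
  qed
qed

lemma Phi_mult: "Phi (a * b) = Phi a * Phi b"
proof -
  let ?A = "Poly_Mapping.keys a" and ?B = "Poly_Mapping.keys b"
  have ab: "a * b = (\<Sum>x\<in>?A. \<Sum>y\<in>?B. Poly_Mapping.single (x + y) (Poly_Mapping.lookup a x * Poly_Mapping.lookup b y))"
  proof -
    have "a * b = (\<Sum>x\<in>?A. Poly_Mapping.single x (Poly_Mapping.lookup a x)) * (\<Sum>y\<in>?B. Poly_Mapping.single y (Poly_Mapping.lookup b y))"
      by (simp only: pm_sum_single[symmetric])
    also have "\<dots> = (\<Sum>x\<in>?A. \<Sum>y\<in>?B. Poly_Mapping.single (x + y) (Poly_Mapping.lookup a x * Poly_Mapping.lookup b y))"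
      by (simp add: sum_product mult_single)
    finally show ?thesis .
  qed
  have "Phi a * Phi b = Phi (\<Sum>x\<in>?A. Poly_Mapping.single x (Poly_Mapping.lookup a x)) * Phi (\<Sum>y\<in>?B. Poly_Mapping.single y (Poly_Mapping.lookup b y))"
    by (simp only: pm_sum_single[symmetric])
  also have "\<dots> = (\<Sum>x\<in>?A. \<Sum>y\<in>?B. Poly_Mapping.single (encm x + encm y) (Poly_Mapping.lookup a x * Poly_Mapping.lookup b y))"
    by (simp add: Phi_sum Phi_single sum_product mult_single)
  also have "\<dots> = Phi (a * b)"
    unfolding ab by (simp add: Phi_sum Phi_single hm_add)
  finally show ?thesis by simp
qed

lemma Phi_eq_0: "Phi p = 0 \<Longrightarrow> p = 0"
  by (rule poly_mapping_eqI) (metis lookup_Phi_hm lookup_zero)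

lemma dpoly_no_zd:
  fixes a b :: "('n::finite,'k::field) dpoly"
  assumes "a * b = 0" shows "a = 0 \<or> b = 0"
proof -
  have "Phi a * Phi b = 0" using assms by (simp add: Phi_mult[symmetric] Phi_zero)
  then have "Phi a = 0 \<or> Phi b = 0" by simp
  then show ?thesis using Phi_eq_0 by blast
qed


definition PV :: "('n \<times> nat) set \<Rightarrow> ('n,'k::field) dpoly set" where
  "PV V = {p. \<forall>w\<in>Poly_Mapping.keys p. Poly_Mapping.keys w \<inter> V \<noteq> {}}"

lemma keys_add_nat: "Poly_Mapping.keys (x + (y :: 'a \<Rightarrow>\<^sub>0 nat)) = Poly_Mapping.keys x \<union> Poly_Mapping.keys y"
  by (auto simp: in_keys_iff lookup_add)

lemma keys_diff_sub: "Poly_Mapping.keys (a - (b :: 'a \<Rightarrow>\<^sub>0 'b::ab_group_add)) \<subseteq> Poly_Mapping.keys a \<union> Poly_Mapping.keys b"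
  by (auto simp: in_keys_iff lookup_minus)

lemma PV_add: assumes "a \<in> PV V" "b \<in> PV V" shows "a + b \<in> PV V"
  unfolding PV_def
proof (rule CollectI, rule ballI)
  fix w assume "w \<in> Poly_Mapping.keys (a + b)"
  then have "w \<in> Poly_Mapping.keys a \<or> w \<in> Poly_Mapping.keys b" using keys_add[of a b] by blast
  then show "Poly_Mapping.keys w \<inter> V \<noteq> {}" using assms unfolding PV_def by blast
qed

lemma PV_diff: assumes "a \<in> PV V" "b \<in> PV V" shows "a - b \<in> PV V"
  unfolding PV_def
proof (rule CollectI, rule ballI)
  fix w assume "w \<in> Poly_Mapping.keys (a - b)"
  then have "w \<in> Poly_Mapping.keys a \<or> w \<in> Poly_Mapping.keys b" using keys_diff_sub[of a b] by blast
  then show "Poly_Mapping.keys w \<inter> V \<noteq> {}" using assms unfolding PV_def by blast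
qed

lemma PV_mult: "b \<in> PV V \<Longrightarrow> r * b \<in> PV V"
proof -
  assume b: "b \<in> PV V"
  show "r * b \<in> PV V" unfolding PV_def
  proof (rule CollectI, rule ballI)
    fix w assume "w \<in> Poly_Mapping.keys (r * b)"
    then obtain x y where "w = x + y" "y \<in> Poly_Mapping.keys b" using keys_mult by blast
    then show "Poly_Mapping.keys w \<inter> V \<noteq> {}" using b unfolding PV_def by (auto simp: keys_add_nat)
  qed
qed

definition piV :: "('n \<times> nat) set \<Rightarrow> ('n,'k::field) dpoly \<Rightarrow> ('n,'k) dpoly" where
  "piV V p = Abs_poly_mapping (\<lambda>w. if Poly_Mapping.keys w \<inter> V = {} then Poly_Mapping.lookup p w else 0)"

lemma lookup_piV: "Poly_Mapping.lookup (piV V p) w = (if Poly_Mapping.keys w \<inter> V = {} then Poly_Mapping.lookup p w else 0)"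
proof -
  have "{w. (if Poly_Mapping.keys w \<inter> V = {} then Poly_Mapping.lookup p w else 0) \<noteq> 0} \<subseteq> Poly_Mapping.keys p"
    by (auto simp: in_keys_iff)
  then have "finite {w. (if Poly_Mapping.keys w \<inter> V = {} then Poly_Mapping.lookup p w else 0) \<noteq> 0}"
    by (rule finite_subset) simp
  then show ?thesis unfolding piV_def by simp
qed

lemma rest_PV: "p - piV V p \<in> PV V"
  unfolding PV_def by (auto simp: in_keys_iff lookup_minus lookup_piV)

lemma keys_piV: "w \<in> Poly_Mapping.keys (piV V p) \<Longrightarrow> Poly_Mapping.keys w \<inter> V = {}"
  by (auto simp: in_keys_iff lookup_piV split: if_splits)

lemma PV_prime:
  fixes a b :: "('n::finite,'k::field) dpoly"
  assumes "a * b \<in> PV V"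
  shows "a \<in> PV V \<or> b \<in> PV V"
proof -
  let ?a = "piV V a" and ?b = "piV V b"
  have eq: "?a * ?b = a * b - (?a * (b - ?b) + (a - ?a) * b)"
    by (simp add: algebra_simps)
  have "?a * (b - ?b) \<in> PV V" by (rule PV_mult[OF rest_PV])
  moreover have "b * (a - ?a) \<in> PV V" by (rule PV_mult[OF rest_PV])
  ultimately have "?a * (b - ?b) + (a - ?a) * b \<in> PV V"
    by (simp add: mult.commute PV_add)
  then have inP: "?a * ?b \<in> PV V" unfolding eq using assms by (rule PV_diff[rotated])
  have "Poly_Mapping.keys (?a * ?b) = {}"
  proof (rule ccontr)
    assume "Poly_Mapping.keys (?a * ?b) \<noteq> {}"
    then obtain w where w: "w \<in> Poly_Mapping.keys (?a * ?b)" by blast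
    then obtain x y where "w = x + y" "x \<in> Poly_Mapping.keys ?a" "y \<in> Poly_Mapping.keys ?b" using keys_mult by blast
    then have "Poly_Mapping.keys w \<inter> V = {}" using keys_piV by (force simp: keys_add_nat)
    then show False using inP w unfolding PV_def by blast
  qed
  then have "?a * ?b = 0" by simp
  then have "?a = 0 \<or> ?b = 0" by (rule dpoly_no_zd)
  then show ?thesis
  proof
    assume "?a = 0" then show ?thesis using rest_PV[of a V] by simp
  next
    assume "?b = 0" then show ?thesis using rest_PV[of b V] by simp
  qed
qed

lemma PV_pow: "m > 0 \<Longrightarrow> (a::('n::finite,'k::field) dpoly) ^ m \<in> PV V \<Longrightarrow> a \<in> PV V"
proof (induction m)
  case 0 then show ?case by simp
next
  case (Suc m)
  then have "a * a ^ m \<in> PV V" by simp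
  then have "a \<in> PV V \<or> a ^ m \<in> PV V" by (rule PV_prime)
  then show ?case using Suc by (cases m) auto
qed

definition SC :: "('n \<times> nat) set \<Rightarrow> bool" where
  "SC V \<longleftrightarrow> (\<forall>i j. (i,j) \<in> V \<longrightarrow> (i, Suc j) \<in> V)"

definition Vset :: "('n::finite \<Rightarrow> nat poly) set \<Rightarrow> ('n \<times> nat) set set" where
  "Vset S = {V. SC V \<and> (\<forall>u\<in>Tm S. Poly_Mapping.keys u \<inter> V \<noteq> {})}"

lemma K_char:
  fixes p :: "('n::finite,'k::field) dpoly"
  shows "Poly_Mapping.keys p \<subseteq> Tm S \<longleftrightarrow> (\<forall>V\<in>Vset S. p \<in> PV V)"
proof
  assume "Poly_Mapping.keys p \<subseteq> Tm S"
  then show "\<forall>V\<in>Vset S. p \<in> PV V"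
  proof (intro ballI)
    fix V assume kp: "Poly_Mapping.keys p \<subseteq> Tm S" and "V \<in> Vset S"
    then have "\<forall>u\<in>Tm S. Poly_Mapping.keys u \<inter> V \<noteq> {}" by (simp add: Vset_def)
    then show "p \<in> PV V" using kp unfolding PV_def by blast
  qed
next
  assume H: "\<forall>V\<in>Vset S. p \<in> PV V"
  show "Poly_Mapping.keys p \<subseteq> Tm S"
  proof
    fix w assume wp: "w \<in> Poly_Mapping.keys p"
    show "w \<in> Tm S"
    proof (rule ccontr)
      assume wT: "w \<notin> Tm S"
      define V where "V = {(i,j). \<not> (\<exists>j'. j \<le> j' \<and> (i,j') \<in> Poly_Mapping.keys w)}"
      have "SC V" unfolding SC_def V_def by auto
      moreover have "\<forall>u\<in>Tm S. Poly_Mapping.keys u \<inter> V \<noteq> {}"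
      proof (intro ballI notI)
        fix u assume uT: "u \<in> Tm S" and e: "Poly_Mapping.keys u \<inter> V = {}"
        have "\<forall>q\<in>Poly_Mapping.keys u. \<exists>j'. snd q \<le> j' \<and> (fst q, j') \<in> Poly_Mapping.keys w"
        proof
          fix q assume "q \<in> Poly_Mapping.keys u"
          then have "q \<notin> V" using e by blast
          then show "\<exists>j'. snd q \<le> j' \<and> (fst q, j') \<in> Poly_Mapping.keys w"
            unfolding V_def by (cases q) auto
        qed
        then show False using key_lemma[OF wT uT] by blast
      qed
      ultimately have "V \<in> Vset S" unfolding Vset_def by blast
      then have "p \<in> PV V" using H by blast
      then have "Poly_Mapping.keys w \<inter> V \<noteq> {}" using wp unfolding PV_def by blast
      then show False unfolding V_def by auto
    qed
  qed
qed


lemma gen_sub_ideal_gen: "G \<subseteq> ideal_gen G"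
  unfolding ideal_gen_def by blast

lemma ideal_gen_least: "is_ideal K \<Longrightarrow> G \<subseteq> K \<Longrightarrow> ideal_gen G \<subseteq> K"
  unfolding ideal_gen_def by blast

lemma ideal_sum: "is_ideal J \<Longrightarrow> (\<And>x. x \<in> A \<Longrightarrow> f x \<in> J) \<Longrightarrow> sum f A \<in> J"
  by (induction A rule: infinite_finite_induct) (auto simp: is_ideal_def)

lemma keys_sigmaR: "Poly_Mapping.keys (sigmaR \<sigma> a) \<subseteq> shift_mono ` Poly_Mapping.keys a"
proof
  fix x assume "x \<in> Poly_Mapping.keys (sigmaR \<sigma> a)"
  moreover have "Poly_Mapping.keys (sigmaR \<sigma> a) \<subseteq> (\<Union>m\<in>Poly_Mapping.keys a. Poly_Mapping.keys (Poly_Mapping.single (shift_mono m) (\<sigma> (Poly_Mapping.lookup a m))))"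
    unfolding sigmaR_def by (rule keys_sum)
  ultimately have "x \<in> (\<Union>m\<in>Poly_Mapping.keys a. Poly_Mapping.keys (Poly_Mapping.single (shift_mono m) (\<sigma> (Poly_Mapping.lookup a m))))"
    by (rule subsetD[rotated])
  then obtain m where "m \<in> Poly_Mapping.keys a" "x \<in> Poly_Mapping.keys (Poly_Mapping.single (shift_mono m) (\<sigma> (Poly_Mapping.lookup a m)))"
    by blast
  then show "x \<in> shift_mono ` Poly_Mapping.keys a" by (auto split: if_splits)
qed

lemma sigmaR_single1: "\<sigma> 1 = 1 \<Longrightarrow> sigmaR \<sigma> (Poly_Mapping.single m 1) = Poly_Mapping.single (shift_mono m) 1"
  unfolding sigmaR_def by simp

lemma lookup_shift_iter:
  "Poly_Mapping.lookup ((shift_mono ^^ k) m) (i,j) = (if k \<le> j then Poly_Mapping.lookup m (i, j - k) else 0)"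
proof (induction k arbitrary: j)
  case 0 then show ?case by simp
next
  case (Suc k)
  show ?case by (cases j) (simp_all add: lookup_shift Suc.IH)
qed

lemma single_pow: "(Poly_Mapping.single a (1::'k::field)) ^ n = Poly_Mapping.single (\<Sum>k<n. a) 1"
  by (induction n) (simp_all add: mult_single add.commute)

context
  fixes \<sigma> :: "'k::field \<Rightarrow> 'k" and J :: "('n::finite,'k) dpoly set"
  assumes s1: "\<sigma> 1 = 1" and sJ: "sigma_ideal \<sigma> J" and wJ: "well_mixed \<sigma> J" and rJ: "radical J"
begin

lemma iJ: "is_ideal J" using sJ by (simp add: sigma_ideal_def)

lemma J1: "Poly_Mapping.single a 1 \<in> J \<Longrightarrow> Poly_Mapping.single (a + b) 1 \<in> J"
proof -
  assume "Poly_Mapping.single a 1 \<in> J"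
  then have "Poly_Mapping.single b 1 * Poly_Mapping.single a 1 \<in> J" using iJ by (simp add: is_ideal_def)
  then show ?thesis by (simp add: mult_single add.commute)
qed

lemma J1': "Poly_Mapping.single a 1 \<in> J \<Longrightarrow> (\<And>q. Poly_Mapping.lookup a q \<le> Poly_Mapping.lookup b q) \<Longrightarrow> Poly_Mapping.single b 1 \<in> J"
  by (metis J1 le_ex_add)

lemma J2: "Poly_Mapping.single a 1 \<in> J \<Longrightarrow> Poly_Mapping.single (shift_mono a) 1 \<in> J"
  using sJ s1 by (metis sigma_ideal_def sigmaR_single1)

lemma J2k: "Poly_Mapping.single a 1 \<in> J \<Longrightarrow> Poly_Mapping.single ((shift_mono ^^ k) a) 1 \<in> J"
  by (induction k) (simp_all add: J2)

lemma J3: "Poly_Mapping.single (a + b) 1 \<in> J \<Longrightarrow> Poly_Mapping.single (a + shift_mono b) 1 \<in> J"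
proof -
  assume "Poly_Mapping.single (a + b) 1 \<in> J"
  then have "Poly_Mapping.single a 1 * Poly_Mapping.single b 1 \<in> J" by (simp add: mult_single)
  then have "Poly_Mapping.single a 1 * sigmaR \<sigma> (Poly_Mapping.single b 1) \<in> J"
    using wJ unfolding well_mixed_def by blast
  then show ?thesis by (simp add: sigmaR_single1[of \<sigma>, OF s1] mult_single)
qed

lemma J4:
  assumes "n > 0" "\<And>q. Poly_Mapping.lookup d q = n * Poly_Mapping.lookup a q" "Poly_Mapping.single d 1 \<in> J"
  shows "Poly_Mapping.single a 1 \<in> J"
proof -
  have "d = (\<Sum>k<n. a)" by (rule poly_mapping_eqI) (simp add: lookup_sum assms(2))
  then have "(Poly_Mapping.single a 1) ^ n \<in> J" using assms(3) by (simp add: single_pow)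
  then show ?thesis using rJ assms(1) unfolding radical_def by blast
qed

definition UJ :: "('n \<Rightarrow> nat poly) set" where
  "UJ = {u. Poly_Mapping.single (mono_of u) 1 \<in> J}"

lemma brk_UJ: "brk UJ \<subseteq> UJ"
proof
  fix x assume "x \<in> brk UJ"
  then obtain g u t where x: "x = (\<lambda>i. g * u i + t i)" and u: "u \<in> UJ" and g: "g \<noteq> 0"
    unfolding brk_def by blast
  let ?k = "degree g"
  have gk: "coeff g ?k \<noteq> 0" using g by simp
  let ?a = "(shift_mono ^^ ?k) (mono_of u)"
  have aJ: "Poly_Mapping.single ?a 1 \<in> J" using u J2k unfolding UJ_def by blast
  have "Poly_Mapping.lookup ?a q \<le> Poly_Mapping.lookup (mono_of x) q" for q
  proof (cases q)
    case (Pair i j)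
    show ?thesis
    proof (cases "?k \<le> j")
      case True
      have g1: "Suc 0 \<le> coeff g ?k" by (rule Suc_leI, rule gr0I, erule notE[OF gk])
      have "Suc 0 * coeff (u i) (j - ?k) \<le> coeff g ?k * coeff (u i) (j - ?k)"
        by (rule mult_le_mono1[OF g1])
      then have "coeff (u i) (j - ?k) \<le> coeff g ?k * coeff (u i) (j - ?k)" by simp
      also have "\<dots> \<le> (\<Sum>l\<le>j. coeff g l * coeff (u i) (j - l))"
        by (rule member_le_sum) (use True in auto)
      also have "\<dots> = coeff (g * u i) j" by (simp add: coeff_mult)
      also have "\<dots> \<le> coeff (x i) j" unfolding x by simp
      finally show ?thesis using True unfolding Pair by (simp add: lookup_shift_iter lookup_mono_of)
    next
      case False
      then show ?thesis unfolding Pair by (simp add: lookup_shift_iter)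
    qed
  qed
  then have "Poly_Mapping.single (mono_of x) 1 \<in> J" by (rule J1'[OF aJ])
  then show "x \<in> UJ" unfolding UJ_def by blast
qed

lemma nprime_UJ: "nprime UJ \<subseteq> UJ"
proof
  fix x assume "x \<in> nprime UJ"
  then obtain u v where x: "x = (\<lambda>i. u i + [:0,1:] * v i)" and uv: "(\<lambda>i. u i + v i) \<in> UJ"
    unfolding nprime_def by blast
  have "Poly_Mapping.single (mono_of u + mono_of v) 1 \<in> J" using uv unfolding UJ_def by (simp add: mono_of_add)
  then have "Poly_Mapping.single (mono_of u + shift_mono (mono_of v)) 1 \<in> J" by (rule J3)
  moreover have "mono_of x = mono_of u + shift_mono (mono_of v)" unfolding x by (rule mono_of_xmul)
  ultimately show "x \<in> UJ" unfolding UJ_def by simp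
qed

lemma brk_mono: "A \<subseteq> B \<Longrightarrow> brk A \<subseteq> brk B"
proof
  fix x assume "A \<subseteq> B" "x \<in> brk A"
  then obtain g u t where "x = (\<lambda>i. g * u i + t i)" "u \<in> A" "g \<noteq> 0"
    unfolding brk_def by blast
  then show "x \<in> brk B" using \<open>A \<subseteq> B\<close> brkI[of u B g t] by blast
qed

lemma nprime_mono: "A \<subseteq> B \<Longrightarrow> nprime A \<subseteq> nprime B"
proof
  fix x assume "A \<subseteq> B" "x \<in> nprime A"
  then obtain u v where "x = (\<lambda>i. u i + [:0,1:] * v i)" "(\<lambda>i. u i + v i) \<in> A"
    unfolding nprime_def by blast
  then show "x \<in> nprime B" using \<open>A \<subseteq> B\<close> nprimeI[of u v B] by blast
qed

lemma Siter_UJ: "S \<subseteq> UJ \<Longrightarrow> Siter S j \<subseteq> UJ"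
proof (induction j)
  case 0 then show ?case by (simp add: Siter_0)
next
  case (Suc j)
  then have "brk (Siter S j) \<subseteq> UJ" using brk_mono brk_UJ by blast
  then have "nprime (brk (Siter S j)) \<subseteq> UJ" using nprime_mono nprime_UJ by blast
  then show ?case by (simp add: Siter_Suc)
qed

lemma T_UJ: "S \<subseteq> UJ \<Longrightarrow> nsqrt (angle S) \<subseteq> UJ"
proof
  fix u assume SU: "S \<subseteq> UJ" and "u \<in> nsqrt (angle S)"
  then obtain m :: nat where m: "m > 0" "(\<lambda>i. of_nat m * u i) \<in> brk (angle S)"
    unfolding nsqrt_def by blast
  have "angle S \<subseteq> UJ" unfolding angle_def using Siter_UJ[OF SU] by blast
  then have "(\<lambda>i. of_nat m * u i) \<in> UJ" using m(2) brk_mono brk_UJ by blast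
  then have "Poly_Mapping.single (mono_of (\<lambda>i. of_nat m * u i)) 1 \<in> J" unfolding UJ_def by blast
  then have "Poly_Mapping.single (mono_of u) 1 \<in> J" by (rule J4[OF m(1) mono_of_nmul])
  then show "u \<in> UJ" unfolding UJ_def by blast
qed

lemma Tm_J: "S \<subseteq> {u. Poly_Mapping.single (mono_of u) 1 \<in> J} \<Longrightarrow> w \<in> Tm S \<Longrightarrow> Poly_Mapping.single w 1 \<in> J"
  using T_UJ unfolding UJ_def Tm_def by blast

end


theorem corollary5p11:
  fixes \<sigma> :: "'k::field_char_0 \<Rightarrow> 'k"
    and I :: "('n::finite, 'k) dpoly set"
  assumes "ring_endo \<sigma>"
    and "sigma_ideal \<sigma> I"
    and "monomial_ideal I"
  shows "rwm_closure \<sigma> I = kspan (nsqrt (angle (supp_set I)))"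
proof -
  define S where "S = supp_set I"
  define K where "K = {p :: ('n,'k) dpoly. Poly_Mapping.keys p \<subseteq> Tm S}"
  have s1: "\<sigma> 1 = 1" using assms(1) unfolding ring_endo_def by blast
  have Keq: "kspan (nsqrt (angle (supp_set I))) = K" unfolding kspan_def K_def Tm_def S_def ..
  have idK: "is_ideal K" unfolding is_ideal_def
  proof (intro conjI ballI allI)
    show "0 \<in> K" unfolding K_def by simp
  next
    fix a b assume "a \<in> K" "b \<in> K"
    then show "a + b \<in> K" unfolding K_def using keys_add[of a b] by blast
  next
    fix r a assume a: "a \<in> K"
    show "r * a \<in> K" unfolding K_def
    proof (rule CollectI, rule subsetI)
      fix w assume "w \<in> Poly_Mapping.keys (r * a)"
      then obtain x y where xy: "w = x + y" "y \<in> Poly_Mapping.keys a" using keys_mult by blast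
      then have "y \<in> Tm S" using a unfolding K_def by blast
      then have "y + x \<in> Tm S" by (rule TM1)
      then show "w \<in> Tm S" using xy(1) by (simp add: add.commute)
    qed
  qed
  have sigK: "sigma_ideal \<sigma> K" unfolding sigma_ideal_def
  proof (intro conjI idK ballI)
    fix a assume a: "a \<in> K"
    show "sigmaR \<sigma> a \<in> K" unfolding K_def
    proof (rule CollectI, rule subsetI)
      fix w assume "w \<in> Poly_Mapping.keys (sigmaR \<sigma> a)"
      then obtain m where "w = shift_mono m" "m \<in> Poly_Mapping.keys a" using keys_sigmaR by blast
      then show "w \<in> Tm S" using a TM4 unfolding K_def by blast
    qed
  qed
  have Kc: "p \<in> K \<longleftrightarrow> (\<forall>V\<in>Vset S. p \<in> PV V)" for p unfolding K_def using K_char by blast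
  have shiftPV: "sigmaR \<sigma> b \<in> PV V" if V: "V \<in> Vset S" and b: "b \<in> PV V" for V b
    unfolding PV_def
  proof (rule CollectI, rule ballI)
    fix w assume "w \<in> Poly_Mapping.keys (sigmaR \<sigma> b)"
    then obtain m where m: "w = shift_mono m" "m \<in> Poly_Mapping.keys b" using keys_sigmaR by blast
    then have "Poly_Mapping.keys m \<inter> V \<noteq> {}" using b unfolding PV_def by blast
    then obtain i j where ij: "(i,j) \<in> Poly_Mapping.keys m" "(i,j) \<in> V" by auto
    have "(i, Suc j) \<in> V" using V ij(2) unfolding Vset_def SC_def by blast
    moreover have "(i, Suc j) \<in> Poly_Mapping.keys w" using ij(1) unfolding m(1) by (simp add: in_keys_iff lookup_shift)
    ultimately show "Poly_Mapping.keys w \<inter> V \<noteq> {}" by blast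
  qed
  have wmK: "well_mixed \<sigma> K" unfolding well_mixed_def
  proof (intro allI impI)
    fix a b assume ab: "a * b \<in> K"
    show "a * sigmaR \<sigma> b \<in> K" unfolding Kc
    proof
      fix V assume V: "V \<in> Vset S"
      then have "a * b \<in> PV V" using ab Kc by blast
      then have "a \<in> PV V \<or> b \<in> PV V" by (rule PV_prime)
      then show "a * sigmaR \<sigma> b \<in> PV V"
      proof
        assume "a \<in> PV V"
        then have "sigmaR \<sigma> b * a \<in> PV V" by (rule PV_mult)
        then show ?thesis by (simp add: mult.commute)
      next
        assume "b \<in> PV V"
        then show ?thesis using shiftPV[OF V] PV_mult by blast
      qed
    qed
  qed
  have radK: "radical K" unfolding radical_def
  proof (intro allI impI)
    fix a :: "('n,'k) dpoly" and m :: nat assume am: "0 < m \<and> a ^ m \<in> K"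
    show "a \<in> K" unfolding Kc
    proof
      fix V assume "V \<in> Vset S"
      then have "a ^ m \<in> PV V" using am Kc by blast
      then show "a \<in> PV V" using PV_pow am by blast
    qed
  qed
  obtain M where M: "I = ideal_gen ((\<lambda>m. Poly_Mapping.single m 1) ` M)"
    using assms(3) unfolding monomial_ideal_def by blast
  have GK: "(\<lambda>m. Poly_Mapping.single m (1::'k)) ` M \<subseteq> K"
  proof
    fix x assume "x \<in> (\<lambda>m. Poly_Mapping.single m (1::'k)) ` M"
    then obtain m where m: "x = Poly_Mapping.single m 1" "m \<in> M" by blast
    then have "Poly_Mapping.single m 1 \<in> ideal_gen ((\<lambda>m. Poly_Mapping.single m 1) ` M)"
      by (intro subsetD[OF gen_sub_ideal_gen]) simp
    then have "Poly_Mapping.single m 1 \<in> I" by (simp only: M)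
    then have "pol_of m \<in> S" unfolding S_def supp_set_def by simp
    then have "mono_of (pol_of m) \<in> Tm S" by (rule S_Tm)
    then show "x \<in> K" unfolding K_def m(1) by simp
  qed
  have IK: "I \<subseteq> K" unfolding M by (rule ideal_gen_least[OF idK GK])
  have sub1: "rwm_closure \<sigma> I \<subseteq> K"
    unfolding rwm_closure_def using sigK wmK radK IK by blast
  have sub2: "K \<subseteq> rwm_closure \<sigma> I"
    unfolding rwm_closure_def
  proof (rule Inter_greatest)
    fix J assume "J \<in> {J. sigma_ideal \<sigma> J \<and> well_mixed \<sigma> J \<and> radical J \<and> I \<subseteq> J}"
    then have sJ: "sigma_ideal \<sigma> J" and wJ: "well_mixed \<sigma> J" and rJ: "radical J" and IJ: "I \<subseteq> J" by auto
    have iJ: "is_ideal J" using sJ by (simp add: sigma_ideal_def)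
    have SJ: "S \<subseteq> {u. Poly_Mapping.single (mono_of u) 1 \<in> J}"
      unfolding S_def supp_set_def using IJ by blast
    show "K \<subseteq> J"
    proof
      fix p assume "p \<in> K"
      then have kp: "Poly_Mapping.keys p \<subseteq> Tm S" unfolding K_def by blast
      have "(\<Sum>w\<in>Poly_Mapping.keys p. Poly_Mapping.single w (Poly_Mapping.lookup p w)) \<in> J"
      proof (rule ideal_sum[OF iJ])
        fix w assume "w \<in> Poly_Mapping.keys p"
        then have "Poly_Mapping.single w 1 \<in> J" using Tm_J[OF s1 sJ wJ rJ SJ] kp by blast
        then have "Poly_Mapping.single 0 (Poly_Mapping.lookup p w) * Poly_Mapping.single w 1 \<in> J"
          using iJ unfolding is_ideal_def by blast
        then show "Poly_Mapping.single w (Poly_Mapping.lookup p w) \<in> J" by (simp add: mult_single)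
      qed
      then show "p \<in> J" by (simp only: pm_sum_single[of p, symmetric])
    qed
  qed
  show ?thesis using sub1 sub2 Keq by blast
qed

end
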